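(* Let $(\mathcal W,\rhd)$ be a $\lambda$A-frame and $\eta$ a hereditary type environment. If $\gamma\vdash A\preceq B$ is derivable and $\eta(X)_p\subseteq\eta(Y)_p$ for every $p\in\mathcal W$ and every pair $X\preceq Y$ in $\gamma$, then $\mathcal I[A]^\eta_p\subseteq\mathcal I[B]^\eta_p$ for every $p\in\mathcal W$.
   Context: Type expressions: fix a countably infinite set of type variables $X,Y,Z,\dots$. Pseudo type expressions are generated by $A::=X\mid A\to A\mid \bullet A\mid \mu X.A$ ($\mu$ binds $X$; $\alpha$-convertible expressions are identified; $\to$ associates to the right; $\bullet$ binds tighter than $\to$, which binds tighter than $\mu$). $A[B/X]$ denotes capture-avoiding substitution. $\top$ abbreviates $\mu X.\bullet X$, and $\bullet^n A$ denotes $A$ prefixed by $n$ copies of $\bullet$. The tail $t(A)$ is defined by $t(X)=X$, $t(A\to B)=t(B)$, $t(\bullet A)=\bullet t(A)$, $t(\mu X.A)=\mu X.t(A)$; it always has the form $\bullet^{m_0}\mu X_1.\bullet^{m_1}\mu X_2.\cdots\mu X_n.\bullet^{m_n}Y$. $A$ is a $\top$-variant iff $Y=X_i$ for some $1\le i\le n$ with $X_i\notin\{X_{i+1},\dots,X_n\}$ and $m_i+\dots+m_n\ge 1$. $A$ is proper in $X$ iff: a variable $Y$ is proper in $X$ iff $Y\neq X$; $\bullet A$ is always proper in $X$; $A\to B$ is proper in $X$ iff both $A,B$ are proper in $X$ or $B$ is a $\top$-variant; for $Y\ne X$, $\mu Y.A$ is proper in $X$ iff $A$ is proper in $X$ or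 $\mu Y.A$ is a $\top$-variant. Type expressions are the least set of pseudo type expressions containing all type variables, closed under $\to$ and $\bullet$, and containing $\mu X.A$ whenever it contains $A$ and $A$ is proper in $X$. Equality: $\cong$ is the least relation on type expressions such that: $A\cong A$; $A\cong B$ implies $B\cong A$; $A\cong B$ and $B\cong C$ imply $A\cong C$; $A\cong B$ implies $\bullet A\cong\bullet B$; $A\cong C$ and $B\cong D$ imply $A\to B\cong C\to D$; $A\to\top\cong\top$; $\mu X.A\cong A[\mu X.A/X]$; and if $A\cong C[A/X]$ with $C$ proper in $X$, then $A\cong\mu X.C$. $\simeq$ is the least relation satisfying the same closure conditions and additionally $\bullet(A\to B)\simeq\bullet A\to\bullet B$. Subtyping: a subtyping assumption $\gamma$ is a finite set of pairs $X\preceq Y$ of type variables in which each type variable occurs at most once; $FTV(\gamma)$ is the set of variables occurring in it. Judgments $\gamma\vdash A\preceq B$ are derived by the rules: $\gamma\cup\{X\preceq Y\}\vdash X\preceq Y$; $\gamma\vdash A\preceq\top$; from $A\simeq B$ infer $\gamma\vdash A\preceq B$; from $\gamma_1\vdash A\preceq B$ and $\gamma_2\vdash B\preceq C$ infer $\gamma_1\cup\gamma_2\vdash A\preceq C$; from $\gamma\vdash A\preceq B$ infer $\gamma\vdash\bullet A\preceq\bullet B$; from $\gamma_1\vdash A'\preceq A$ and $\gamma_2\vdash B\preceq B'$ infer $\gamma_1\cup\gamma_2\vdash A\to B\preceq A'\to B'$; from $\gamma\cup\{X\preceq Y\}\vdash A\preceq B$ infer $\gamma\vdash\mu X.A\preceq\mu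 Y.B$, provided $X\notin FTV(\gamma)\cup FTV(B)$, $Y\notin FTV(\gamma)\cup FTV(A)$, $A$ is proper in $X$ and $B$ is proper in $Y$; and $\gamma\vdash A\preceq\bullet A$. All sets $\gamma\cup\{X\preceq Y\}$, $\gamma_1\cup\gamma_2$ must be well-formed subtyping assumptions. $A\preceq B$ means $\{\}\vdash A\preceq B$ is derivable. Semantics: a syntactical $\lambda$-algebra $(\mathcal V,\cdot,[\![-]\!])$ consists of a nonempty set $\mathcal V$, a map $\cdot:\mathcal V\times\mathcal V\to\mathcal V$, and values $[\![M]\!]_\rho\in\mathcal V$ for untyped $\lambda$-terms $M$ and maps $\rho$ from individual variables to $\mathcal V$, such that $[\![x]\!]_\rho=\rho(x)$, $[\![MN]\!]_\rho=[\![M]\!]_\rho\cdot[\![N]\!]_\rho$, $[\![\lambda x.M]\!]_\rho\cdot v=[\![M]\!]_{\rho[v/x]}$, $[\![M]\!]_\rho$ depends only on $\rho$ restricted to free variables of $M$, and $M=_\beta N$ implies $[\![M]\!]_\rho=[\![N]\!]_\rho$; fix one. A well-founded frame is a pair $(\mathcal W,\rhd)$ with $\mathcal W$ nonempty and $\rhd$ a binary relation on $\mathcal W$ admitting no infinite chain $p_0\rhd p_1\rhd p_2\rhd\cdots$; $\trianglerighteq$ denotes the reflexive-transitive closure of $\rhd$. $\rhd$ is locally linear if whenever $p\rhd q$ there is $r$ with $p\trianglerighteq r\rhd q$ such that $r\rhd s$ implies $q\trianglerighteq s$ for all $s$. A $\lambda$A-frame is a well-founded frame whose $\rhd$ is locally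 linear. A type environment $\eta$ assigns a set $\eta(X)_p\subseteq\mathcal V$ to each type variable $X$ and world $p$; it is hereditary if $p\rhd q$ implies $\eta(X)_p\subseteq\eta(X)_q$. For hereditary $\eta$, $\mathcal I[A]^\eta_p\subseteq\mathcal V$ is defined (by well-founded induction on $p$ and the syntactic rank of $A$) by: $\mathcal I[A]^\eta_p=\mathcal V$ if $A$ is a $\top$-variant; otherwise $\mathcal I[X]^\eta_p=\eta(X)_p$; $\mathcal I[\bullet A]^\eta_p=\{u\mid u\in\mathcal I[A]^\eta_q\text{ for all }q\text{ with }p\rhd q\}$; $\mathcal I[A\to B]^\eta_p=\{u\mid \text{for all }q\text{ with }p\trianglerighteq q\text{ and all }v\in\mathcal I[A]^\eta_q,\ u\cdot v\in\mathcal I[B]^\eta_q\}$; $\mathcal I[\mu X.A]^\eta_p=\mathcal I[A[\mu X.A/X]]^\eta_p$. *)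

theory Defs
  imports Main
begin

text \<open>Free type variables are named by natural numbers (FV); variables bound by mu
are de Bruijn indices (BV). Alpha-convertible expressions are thus identified.\<close>

datatype ty = FV nat | BV nat | Arr ty ty | Lat ty | Mu ty

text \<open>Opening: replace the bound index k by u (A[u/X] for the variable bound by mu).\<close>
fun opn :: "nat \<Rightarrow> ty \<Rightarrow> ty \<Rightarrow> ty" where
  "opn k u (FV X) = FV X"
| "opn k u (BV i) = (if i = k then u else BV i)"
| "opn k u (Arr A B) = Arr (opn k u A) (opn k u B)"
| "opn k u (Lat A) = Lat (opn k u A)"
| "opn k u (Mu A) = Mu (opn (Suc k) u A)"

fun fvs :: "ty \<Rightarrow> nat set" where
  "fvs (FV X) = {X}"
| "fvs (BV i) = {}"
| "fvs (Arr A B) = fvs A \<union> fvs B"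
| "fvs (Lat A) = fvs A"
| "fvs (Mu A) = fvs A"

text \<open>Capture-avoiding substitution A[B/X] for a free variable X (B locally closed).\<close>
fun subst :: "nat \<Rightarrow> ty \<Rightarrow> ty \<Rightarrow> ty" where
  "subst X B (FV Y) = (if X = Y then B else FV Y)"
| "subst X B (BV i) = BV i"
| "subst X B (Arr A C) = Arr (subst X B A) (subst X B C)"
| "subst X B (Lat A) = Lat (subst X B A)"
| "subst X B (Mu A) = Mu (subst X B A)"

definition top :: ty where "top = Mu (Lat (BV 0))"

fun tail :: "ty \<Rightarrow> ty" where
  "tail (FV X) = FV X"
| "tail (BV i) = BV i"
| "tail (Arr A B) = tail B"
| "tail (Lat A) = Lat (tail A)"
| "tail (Mu A) = Mu (tail A)"

text \<open>topv ms T: ms has one entry per enclosing mu (innermost first), counting the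
bullets occurring after that mu. The final variable must be bound by one of the
mus of the tail (de Bruijn: this is the innermost mu binding that name), with at
least one bullet after that binder.\<close>
fun topv :: "nat list \<Rightarrow> ty \<Rightarrow> bool" where
  "topv ms (FV X) = False"
| "topv ms (BV i) = (i < length ms \<and> ms ! i \<ge> 1)"
| "topv ms (Arr A B) = topv ms B"
| "topv ms (Lat A) = topv (map Suc ms) A"
| "topv ms (Mu A) = topv (0 # ms) A"

definition topvariant :: "ty \<Rightarrow> bool" where
  "topvariant A = topv [] (tail A)"

fun proper :: "nat \<Rightarrow> ty \<Rightarrow> bool" where
  "proper X (FV Y) = (Y \<noteq> X)"
| "proper X (BV i) = True"
| "proper X (Lat A) = True"
| "proper X (Arr A B) = ((proper X A \<and> proper X B) \<or> topvariant B)"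
| "proper X (Mu A) = (proper X A \<or> topvariant (Mu A))"

inductive is_type :: "ty \<Rightarrow> bool" where
  t_var: "is_type (FV X)"
| t_arr: "is_type A \<Longrightarrow> is_type B \<Longrightarrow> is_type (Arr A B)"
| t_lat: "is_type A \<Longrightarrow> is_type (Lat A)"
| t_mu: "X \<notin> fvs A \<Longrightarrow> is_type (opn 0 (FV X) A) \<Longrightarrow> proper X (opn 0 (FV X) A)
          \<Longrightarrow> is_type (Mu A)"

section \<open>Equality: eqv False is \<cong>, eqv True is \<simeq>\<close>

inductive eqv :: "bool \<Rightarrow> ty \<Rightarrow> ty \<Rightarrow> bool" where
  e_refl: "is_type A \<Longrightarrow> eqv b A A"
| e_sym: "eqv b A B \<Longrightarrow> eqv b B A"
| e_trans: "eqv b A B \<Longrightarrow> eqv b B C \<Longrightarrow> eqv b A C"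
| e_lat: "eqv b A B \<Longrightarrow> eqv b (Lat A) (Lat B)"
| e_arr: "eqv b A C \<Longrightarrow> eqv b B D \<Longrightarrow> eqv b (Arr A B) (Arr C D)"
| e_top: "is_type A \<Longrightarrow> eqv b (Arr A top) top"
| e_unf: "is_type (Mu A) \<Longrightarrow> eqv b (Mu A) (opn 0 (Mu A) A)"
| e_fix: "is_type A \<Longrightarrow> is_type (Mu C) \<Longrightarrow> eqv b A (opn 0 A C) \<Longrightarrow> eqv b A (Mu C)"
| e_dist: "is_type A \<Longrightarrow> is_type B \<Longrightarrow> eqv True (Lat (Arr A B)) (Arr (Lat A) (Lat B))"

abbreviation cong_ty :: "ty \<Rightarrow> ty \<Rightarrow> bool" where "cong_ty \<equiv> eqv False"
abbreviation sim_ty :: "ty \<Rightarrow> ty \<Rightarrow> bool" where "sim_ty \<equiv> eqv True"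

definition ftv :: "(nat \<times> nat) set \<Rightarrow> nat set" where
  "ftv g = fst ` g \<union> snd ` g"

definition wfa :: "(nat \<times> nat) set \<Rightarrow> bool" where
  "wfa g \<longleftrightarrow> finite g \<and> (\<forall>(X,Y)\<in>g. X \<noteq> Y) \<and>
     (\<forall>(X,Y)\<in>g. \<forall>(X',Y')\<in>g. (X,Y) \<noteq> (X',Y') \<longrightarrow> {X,Y} \<inter> {X',Y'} = {})"

inductive sub :: "(nat \<times> nat) set \<Rightarrow> ty \<Rightarrow> ty \<Rightarrow> bool" where
  s_ass: "wfa (insert (X,Y) g) \<Longrightarrow> sub (insert (X,Y) g) (FV X) (FV Y)"
| s_top: "wfa g \<Longrightarrow> is_type A \<Longrightarrow> sub g A top"
| s_eq: "wfa g \<Longrightarrow> sim_ty A B \<Longrightarrow> sub g A B"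
| s_trans: "sub g1 A B \<Longrightarrow> sub g2 B C \<Longrightarrow> wfa (g1 \<union> g2) \<Longrightarrow> sub (g1 \<union> g2) A C"
| s_lat: "sub g A B \<Longrightarrow> sub g (Lat A) (Lat B)"
| s_arr: "sub g1 A' A \<Longrightarrow> sub g2 B B' \<Longrightarrow> wfa (g1 \<union> g2) \<Longrightarrow>
          sub (g1 \<union> g2) (Arr A B) (Arr A' B')"
| s_mu: "sub (insert (X,Y) g) (opn 0 (FV X) A) (opn 0 (FV Y) B) \<Longrightarrow> wfa (insert (X,Y) g) \<Longrightarrow>
          X \<notin> fvs A \<Longrightarrow> Y \<notin> fvs B \<Longrightarrow>
          X \<notin> ftv g \<union> fvs (opn 0 (FV Y) B) \<Longrightarrow> Y \<notin> ftv g \<union> fvs (opn 0 (FV X) A) \<Longrightarrow>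
          proper X (opn 0 (FV X) A) \<Longrightarrow> proper Y (opn 0 (FV Y) B) \<Longrightarrow>
          sub g (Mu A) (Mu B)"
| s_later: "wfa g \<Longrightarrow> is_type A \<Longrightarrow> sub g A (Lat A)"

datatype lterm = LVar nat | LApp lterm lterm | LAbs lterm

fun lift :: "lterm \<Rightarrow> nat \<Rightarrow> lterm" where
  "lift (LVar i) k = (if i < k then LVar i else LVar (Suc i))"
| "lift (LApp s t) k = LApp (lift s k) (lift t k)"
| "lift (LAbs s) k = LAbs (lift s (Suc k))"

fun lsubst :: "lterm \<Rightarrow> lterm \<Rightarrow> nat \<Rightarrow> lterm" where
  "lsubst (LVar i) s k = (if k < i then LVar (i - 1) else if i = k then s else LVar i)"
| "lsubst (LApp t u) s k = LApp (lsubst t s k) (lsubst u s k)"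
| "lsubst (LAbs t) s k = LAbs (lsubst t (lift s 0) (Suc k))"

inductive beta :: "lterm \<Rightarrow> lterm \<Rightarrow> bool" where
  b_beta: "beta (LApp (LAbs s) t) (lsubst s t 0)"
| b_appL: "beta s t \<Longrightarrow> beta (LApp s u) (LApp t u)"
| b_appR: "beta s t \<Longrightarrow> beta (LApp u s) (LApp u t)"
| b_abs: "beta s t \<Longrightarrow> beta (LAbs s) (LAbs t)"

fun lfv :: "lterm \<Rightarrow> nat set" where
  "lfv (LVar i) = {i}"
| "lfv (LApp s t) = lfv s \<union> lfv t"
| "lfv (LAbs s) = {i. Suc i \<in> lfv s}"

definition scons :: "'v \<Rightarrow> (nat \<Rightarrow> 'v) \<Rightarrow> nat \<Rightarrow> 'v" where
  "scons v \<rho> n = (case n of 0 \<Rightarrow> v | Suc m \<Rightarrow> \<rho> m)"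

definition syn_lambda_algebra :: "('v \<Rightarrow> 'v \<Rightarrow> 'v) \<Rightarrow> (lterm \<Rightarrow> (nat \<Rightarrow> 'v) \<Rightarrow> 'v) \<Rightarrow> bool" where
  "syn_lambda_algebra app sem \<longleftrightarrow>
     (\<forall>x \<rho>. sem (LVar x) \<rho> = \<rho> x) \<and>
     (\<forall>M N \<rho>. sem (LApp M N) \<rho> = app (sem M \<rho>) (sem N \<rho>)) \<and>
     (\<forall>M \<rho> v. app (sem (LAbs M) \<rho>) v = sem M (scons v \<rho>)) \<and>
     (\<forall>M \<rho> \<rho>'. (\<forall>x\<in>lfv M. \<rho> x = \<rho>' x) \<longrightarrow> sem M \<rho> = sem M \<rho>') \<and>
     (\<forall>M N \<rho>. equivclp beta M N \<longrightarrow> sem M \<rho> = sem N \<rho>)"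

definition well_founded_frame :: "('w \<Rightarrow> 'w \<Rightarrow> bool) \<Rightarrow> bool" where
  "well_founded_frame R \<longleftrightarrow> \<not> (\<exists>f. \<forall>i. R (f i) (f (Suc i)))"

definition locally_linear :: "('w \<Rightarrow> 'w \<Rightarrow> bool) \<Rightarrow> bool" where
  "locally_linear R \<longleftrightarrow> (\<forall>p q. R p q \<longrightarrow>
      (\<exists>r. R\<^sup>*\<^sup>* p r \<and> R r q \<and> (\<forall>s. R r s \<longrightarrow> R\<^sup>*\<^sup>* q s)))"

definition lamA_frame :: "('w \<Rightarrow> 'w \<Rightarrow> bool) \<Rightarrow> bool" where
  "lamA_frame R \<longleftrightarrow> well_founded_frame R \<and> locally_linear R"

definition hereditary :: "('w \<Rightarrow> 'w \<Rightarrow> bool) \<Rightarrow> (nat \<Rightarrow> 'w \<Rightarrow> 'v set) \<Rightarrow> bool" where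
  "hereditary R \<eta> \<longleftrightarrow> (\<forall>X p q. R p q \<longrightarrow> \<eta> X p \<subseteq> \<eta> X q)"

text \<open>Syntactic rank used for the well-founded recursion (top-variants have rank 0,
everything below a bullet is ignored).\<close>
fun rank0 :: "ty \<Rightarrow> nat" where
  "rank0 (FV X) = 0"
| "rank0 (BV i) = 0"
| "rank0 (Lat A) = 0"
| "rank0 (Arr A B) = (if topvariant (Arr A B) then 0
                       else Suc (max (rank0 A) (rank0 B)))"
| "rank0 (Mu A) = (if topvariant (Mu A) then 0 else Suc (rank0 A))"

lemma topv_tail: "topv ms (tail T) = topv ms T"
  by (induction T arbitrary: ms) auto

lemma topv_opn: "length ms \<le> j \<Longrightarrow> topv ms T \<Longrightarrow> topv ms (opn j u T)"
  by (induction T arbitrary: ms j) auto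

lemma topv_opn_FV: "length ms \<le> j \<Longrightarrow> topv ms (opn j (FV X) T) \<Longrightarrow> topv ms T"
proof (induction T arbitrary: ms j)
  case (Mu T)
  then show ?case using Mu.IH[of "0 # ms" "Suc j"] by simp
qed (auto split: if_splits)

lemma rank0_tv: "topvariant T \<Longrightarrow> rank0 T = 0"
  by (cases T) auto

lemma tv_opn: "topvariant T \<Longrightarrow> topvariant (opn k u T)"
  using topv_opn[of "[]" k T u] by (simp add: topvariant_def topv_tail)

lemma tv_opn_FV: "topvariant (opn k (FV X) T) \<Longrightarrow> topvariant T"
  using topv_opn_FV[of "[]" k X T] by (simp add: topvariant_def topv_tail)

lemma tv_simps[simp]:
  "topvariant (Arr A B) = topvariant B"
  "\<not> topvariant (FV X)"
  "topvariant (BV i) = False"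
  by (simp_all add: topvariant_def)

lemma rank_opn: "proper X (opn k (FV X) T) \<Longrightarrow> rank0 (opn k u T) \<le> rank0 T"
proof (induction T arbitrary: k)
  case (Arr A B)
  show ?case
  proof (cases "topvariant (opn k u (Arr A B))")
    case True then show ?thesis by (simp only: rank0_tv)
  next
    case False
    have nt: "\<not> topvariant (Arr A B)" using False tv_opn by blast
    hence "\<not> topvariant (opn k (FV X) B)" using tv_opn_FV by auto
    then have "proper X (opn k (FV X) A)" "proper X (opn k (FV X) B)" using Arr.prems by auto
    then have "rank0 (opn k u A) \<le> rank0 A" "rank0 (opn k u B) \<le> rank0 B" using Arr.IH by auto
    then show ?thesis using False nt by (auto simp del: tv_simps)
  qed
next
  case (Mu A)
  show ?case
  proof (cases "topvariant (opn k u (Mu A))")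
    case True then show ?thesis by (simp only: rank0_tv)
  next
    case False
    have nt: "\<not> topvariant (Mu A)" using False tv_opn by blast
    hence "\<not> topvariant (opn k (FV X) (Mu A))" using tv_opn_FV by blast
    then show ?thesis using Mu False nt by auto
  qed
qed (auto)

locale wf_frame =
  fixes R :: "'w \<Rightarrow> 'w \<Rightarrow> bool"
  assumes no_chain: "well_founded_frame R"
begin

function interp :: "('v \<Rightarrow> 'v \<Rightarrow> 'v) \<Rightarrow> (nat \<Rightarrow> 'w \<Rightarrow> 'v set) \<Rightarrow> ty \<Rightarrow> 'w \<Rightarrow> 'v set" where
  "interp app \<eta> (FV X) p = \<eta> X p"
| "interp app \<eta> (BV i) p = {}"
| "interp app \<eta> (Lat A) p =
     (if topvariant (Lat A) then UNIV
      else {u. \<forall>q\<in>{q. R p q}. u \<in> interp app \<eta> A q})"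
| "interp app \<eta> (Arr A B) p =
     (if topvariant (Arr A B) then UNIV
      else {u. \<forall>q\<in>{q. R\<^sup>*\<^sup>* p q}. \<forall>v. v \<in> interp app \<eta> A q \<longrightarrow> app u v \<in> interp app \<eta> B q})"
| "interp app \<eta> (Mu A) p =
     (if topvariant (Mu A) then UNIV
      else if (\<exists>X. proper X (opn 0 (FV X) A)) then interp app \<eta> (opn 0 (Mu A) A) p
      else {})"
  by pat_completeness auto

termination
proof (relation "inv_image ({(q,p). R p q}\<^sup>+ <*lex*> measure rank0) (\<lambda>(a,e,A,p). (p,A))")
  have "wf {(q,p). R p q}"
    using no_chain unfolding well_founded_frame_def wf_iff_no_infinite_down_chain by auto
  then show "wf (inv_image ({(q,p). R p q}\<^sup>+ <*lex*> measure rank0) (\<lambda>(a,e,A,p). (p,A)))"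
    by (intro wf_inv_image wf_lex_prod wf_trancl) auto
next
  fix app :: "'v \<Rightarrow> 'v \<Rightarrow> 'v" and \<eta> A p q
  assume "q \<in> {q. R p q}"
  then show "((app, \<eta>, A, q), app, \<eta>, Lat A, p)
     \<in> inv_image ({(q,p). R p q}\<^sup>+ <*lex*> measure rank0) (\<lambda>(a,e,A,p). (p,A))" by auto
next
  have tr: "(q,p) \<in> {(q,p). R p q}\<^sup>+" if "R\<^sup>+\<^sup>+ p q" for p q
    using that by (induction rule: tranclp_induct) (auto intro: trancl_into_trancl2)
  fix app :: "'v \<Rightarrow> 'v \<Rightarrow> 'v" and \<eta> A B p q
  assume a: "\<not> topvariant (Arr A B)" "q \<in> {q. R\<^sup>*\<^sup>* p q}"
  then have "p = q \<or> R\<^sup>+\<^sup>+ p q" by (auto dest: rtranclpD)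
  then show "((app, \<eta>, A, q), app, \<eta>, Arr A B, p)
     \<in> inv_image ({(q,p). R p q}\<^sup>+ <*lex*> measure rank0) (\<lambda>(a,e,A,p). (p,A))"
   and "((app, \<eta>, B, q), app, \<eta>, Arr A B, p)
     \<in> inv_image ({(q,p). R p q}\<^sup>+ <*lex*> measure rank0) (\<lambda>(a,e,A,p). (p,A))"
    using a tr by auto
next
  fix app :: "'v \<Rightarrow> 'v \<Rightarrow> 'v" and \<eta> A p
  assume a: "\<not> topvariant (Mu A)" "\<exists>X. proper X (opn 0 (FV X) A)"
  then obtain X where "proper X (opn 0 (FV X) A)" by blast
  then have "rank0 (opn 0 (Mu A) A) \<le> rank0 A" by (rule rank_opn)
  then show "((app, \<eta>, opn 0 (Mu A) A, p), app, \<eta>, Mu A, p)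
     \<in> inv_image ({(q,p). R p q}\<^sup>+ <*lex*> measure rank0) (\<lambda>(a,e,A,p). (p,A))"
    using a by auto
qed

end

end

theory Submission
  imports Defs
begin


lemma tv_eq: "topvariant A = topv [] A"
  by (simp add: topvariant_def topv_tail)

fun lc :: "nat \<Rightarrow> ty \<Rightarrow> bool" where
  "lc k (FV X) = True"
| "lc k (BV i) = (i < k)"
| "lc k (Arr A B) = (lc k A \<and> lc k B)"
| "lc k (Lat A) = lc k A"
| "lc k (Mu A) = lc (Suc k) A"

fun properB :: "nat \<Rightarrow> ty \<Rightarrow> bool" where
  "properB k (FV X) = True"
| "properB k (BV i) = (i \<noteq> k)"
| "properB k (Lat A) = True"
| "properB k (Arr A B) = ((properB k A \<and> properB k B) \<or> topvariant B)"
| "properB k (Mu A) = (properB (Suc k) A \<or> topvariant (Mu A))"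

fun pm :: "ty \<Rightarrow> bool" where
  "pm (FV X) = True"
| "pm (BV i) = True"
| "pm (Arr A B) = (pm A \<and> pm B)"
| "pm (Lat A) = pm A"
| "pm (Mu A) = (properB 0 A \<and> pm A)"

lemma tv_opn_iff: "topvariant (opn k (FV X) T) = topvariant T"
  using tv_opn tv_opn_FV by blast

lemma proper_opn_FV: "proper Z (opn k (FV Z) D) = (properB k D \<and> proper Z D)"
proof (induction D arbitrary: k)
  case (Arr A B) then show ?case using tv_opn_iff by auto
next
  case (Mu E)
  have "topvariant (Mu (opn (Suc k) (FV Z) E)) = topvariant (Mu E)"
    using tv_opn_iff[of k Z "Mu E"] by simp
  then show ?case using Mu by auto
qed auto

lemma proper_fresh: "Z \<notin> fvs D \<Longrightarrow> proper Z D"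
  by (induction D) auto

lemma finite_fvs: "finite (fvs D)"
  by (induction D) auto

lemma ex_proper: "(\<exists>Z. proper Z (opn 0 (FV Z) A)) = properB 0 A"
proof
  assume "\<exists>Z. proper Z (opn 0 (FV Z) A)" then show "properB 0 A" using proper_opn_FV by blast
next
  assume a: "properB 0 A"
  obtain Z where "Z \<notin> fvs A" using finite_fvs ex_new_if_finite infinite_UNIV_nat by blast
  then show "\<exists>Z. proper Z (opn 0 (FV Z) A)" using a proper_opn_FV proper_fresh by blast
qed

lemma lc_mono: "lc k D \<Longrightarrow> k \<le> j \<Longrightarrow> lc j D"
  by (induction D arbitrary: k j) auto

lemma opn_lc: "lc k D \<Longrightarrow> opn k U D = D"
  by (induction D arbitrary: k) auto

lemma subst_fresh: "X \<notin> fvs D \<Longrightarrow> subst X T D = D"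
  by (induction D) auto

lemma subst_opn: "lc 0 T \<Longrightarrow> subst X T (opn k U D) = opn k (subst X T U) (subst X T D)"
  by (induction D arbitrary: k) (auto simp: opn_lc lc_mono)

lemma opn_subst_intro: "X \<notin> fvs C \<Longrightarrow> lc 0 T \<Longrightarrow> opn k T C = subst X T (opn k (FV X) C)"
  by (simp add: subst_opn subst_fresh)

lemma lc_opn: "lc (Suc k) E \<Longrightarrow> lc k U \<Longrightarrow> lc k (opn k U E)"
proof (induction E arbitrary: k U)
  case (Mu E) then show ?case using Mu.IH[of "Suc k" U] lc_mono[of k U "Suc k"] by simp
qed auto

lemma lc_opn_FV_rev: "lc k (opn k (FV X) A) \<Longrightarrow> lc (Suc k) A"
  by (induction A arbitrary: k) (auto split: if_splits)

lemma lc_subst: "lc k D \<Longrightarrow> lc 0 T \<Longrightarrow> lc k (subst X T D)"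
  by (induction D arbitrary: k) (auto intro: lc_mono)

lemma topv_subst: "topv ms D \<Longrightarrow> topv ms (subst X T D)"
  by (induction D arbitrary: ms) auto

lemma tv_subst: "topvariant D \<Longrightarrow> topvariant (subst X T D)"
  using topv_subst tv_eq by metis

lemma topv_lc_app: "lc (length ms) U \<Longrightarrow> topv (ms @ xs) U = topv ms U"
  proof (induction U arbitrary: ms xs)
  case (Mu U) then show ?case using Mu.IH[of "0 # ms" xs] by simp
qed (auto simp: nth_append)

lemma topv_opn_unf: "lc 0 U \<Longrightarrow> topv [] U \<Longrightarrow> length ms = k \<Longrightarrow> topv (ms @ [m]) D \<Longrightarrow> topv ms (opn k U D)"
proof (induction D arbitrary: ms k m)
  case (BV i)
  then show ?case using topv_lc_app[of "[]" U ms] by (auto simp: nth_append split: if_splits)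
next
  case (Lat A) then show ?case using Lat.IH[of "map Suc ms" k "Suc m"] by simp
next
  case (Mu A) then show ?case using Mu.IH[of "0 # ms" "Suc k" m] by simp
qed auto

lemma tv_unfold: "lc 0 (Mu E) \<Longrightarrow> topvariant (Mu E) \<Longrightarrow> topvariant (opn 0 (Mu E) E)"
  using topv_opn_unf[of "Mu E" "[]" 0 0 E] by (simp add: tv_eq)

lemma properB_lc: "lc j T \<Longrightarrow> j \<le> k \<Longrightarrow> properB k T"
  by (induction T arbitrary: j k) auto

lemma properB_subst: "properB k D \<Longrightarrow> lc 0 T \<Longrightarrow> properB k (subst X T D)"
proof (induction D arbitrary: k)
  case (Mu E) then show ?case using tv_subst[of "Mu E" X T] by auto
qed (auto intro: properB_lc tv_subst)

lemma properB_opn: "properB j D \<Longrightarrow> j \<noteq> k \<Longrightarrow> lc 0 U \<Longrightarrow> properB j (opn k U D)"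
proof (induction D arbitrary: j k)
  case (Mu E)
  then show ?case using tv_opn[of "Mu E" k U] by auto
qed (auto intro: properB_lc tv_opn)

lemma properB_opn_FV_rev: "properB j (opn k (FV X) D) \<Longrightarrow> j \<noteq> k \<Longrightarrow> properB j D"
proof (induction D arbitrary: j k)
  case (Mu E)
  then show ?case using tv_opn_iff[of k X "Mu E"] by auto
qed (auto simp: tv_opn_iff split: if_splits)

lemma pm_opn: "pm D \<Longrightarrow> pm U \<Longrightarrow> lc 0 U \<Longrightarrow> pm (opn k U D)"
  by (induction D arbitrary: k) (auto intro: properB_opn)

lemma pm_opn_FV_rev: "pm (opn k (FV X) D) \<Longrightarrow> pm D"
  by (induction D arbitrary: k) (auto intro: properB_opn_FV_rev split: if_splits)

lemma pm_subst: "pm D \<Longrightarrow> pm T \<Longrightarrow> lc 0 T \<Longrightarrow> pm (subst X T D)"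
  by (induction D) (auto intro: properB_subst)

lemma is_type_lc_pm: "is_type D \<Longrightarrow> lc 0 D \<and> pm D"
proof (induction rule: is_type.induct)
  case (t_mu X A)
  then show ?case using lc_opn_FV_rev[of 0 X A] pm_opn_FV_rev[of 0 X A] proper_opn_FV[of X 0 A] by auto
qed auto

lemma fvs_opn: "fvs (opn k U D) \<subseteq> fvs U \<union> fvs D"
  by (induction D arbitrary: k) auto

lemma proper_opn: "proper X D \<Longrightarrow> proper X U \<Longrightarrow> proper X (opn k U D)"
proof (induction D arbitrary: k)
  case (Mu E) then show ?case using tv_opn[of "Mu E" k U] by auto
qed (auto intro: tv_opn)

lemma tv_top: "topvariant top"
  by (simp add: top_def tv_eq)



definition wt :: "ty \<Rightarrow> bool" where "wt D \<longleftrightarrow> lc 0 D \<and> pm D"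

context wf_frame begin

lemma tr_conv: "R\<^sup>+\<^sup>+ p q \<Longrightarrow> (q,p) \<in> {(q,p). R p q}\<^sup>+"
  by (induction rule: tranclp_induct) (auto intro: trancl_into_trancl2)

lemma world_induct:
  assumes "\<And>p. (\<And>q. R\<^sup>+\<^sup>+ p q \<Longrightarrow> P q) \<Longrightarrow> P p" shows "P p"
proof -
  have "wf {(q,p). R p q}"
    using no_chain unfolding well_founded_frame_def wf_iff_no_infinite_down_chain by auto
  then have wf: "wf ({(q,p). R p q}\<^sup>+)" by (rule wf_trancl)
  show ?thesis
  proof (induction p rule: wf_induct[OF wf])
    case (1 p) then show ?case using assms tr_conv by blast
  qed
qed

lemma interp_tv: "topvariant T \<Longrightarrow> interp app \<eta> T p = UNIV"
  by (cases T) auto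

lemma interp_Lat: "interp app \<eta> (Lat A) p = {u. \<forall>q. R p q \<longrightarrow> u \<in> interp app \<eta> A q}"
proof (cases "topvariant (Lat A)")
  case True
  then have "topvariant A" by (simp add: tv_eq)
  then show ?thesis using True by (simp add: interp_tv)
qed auto

lemma interp_Arr: "interp app \<eta> (Arr A B) p =
   {u. \<forall>q. R\<^sup>*\<^sup>* p q \<longrightarrow> (\<forall>v \<in> interp app \<eta> A q. app u v \<in> interp app \<eta> B q)}"
proof (cases "topvariant (Arr A B)")
  case True
  then have "topvariant B" by simp
  then show ?thesis using True by (simp add: interp_tv del: tv_simps)
qed auto

lemma interp_Mu: "\<not> topvariant (Mu A) \<Longrightarrow> properB 0 A \<Longrightarrow>
   interp app \<eta> (Mu A) p = interp app \<eta> (opn 0 (Mu A) A) p"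
  by (simp add: ex_proper)

lemma interp_unf: assumes w: "wt (Mu A)"
  shows "interp app \<eta> (Mu A) p = interp app \<eta> (opn 0 (Mu A) A) p"
proof (cases "topvariant (Mu A)")
  case True
  have "lc 0 (Mu A)" using w unfolding wt_def by (rule conjunct1)
  then have "topvariant (opn 0 (Mu A) A)" using True by (rule tv_unfold)
  then have "interp app \<eta> (opn 0 (Mu A) A) p = UNIV" by (rule interp_tv)
  moreover have "interp app \<eta> (Mu A) p = UNIV" using True by (rule interp_tv)
  ultimately show ?thesis by simp
next
  case False
  have "properB 0 A" using w by (simp add: wt_def)
  then show ?thesis using False by (rule interp_Mu[rotated])
qed

lemma her:
  shows "hereditary R \<eta> \<Longrightarrow> R p q \<Longrightarrow> interp app \<eta> T p \<subseteq> interp app \<eta> T q"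
proof (induction app \<eta> T p arbitrary: q rule: interp.induct)
  case (1 app \<eta> X p)
  then have "\<eta> X p \<subseteq> \<eta> X q" unfolding hereditary_def by blast
  then show ?case by simp
next
  case (3 app \<eta> A p)
  show ?case
  proof (cases "topvariant (Lat A)")
    case True then show ?thesis by (simp add: interp_tv del: interp.simps)
  next
    case False
    then show ?thesis using 3 by (auto simp: interp_Lat)
  qed
next
  case (4 app \<eta> A B p)
  then have "R p q" by simp
  then show ?case unfolding interp_Arr using converse_rtranclp_into_rtranclp[of R p q] by blast
next
  case (5 app \<eta> A p)
  show ?case
  proof (cases "topvariant (Mu A)")
    case True then show ?thesis by (simp add: interp_tv del: interp.simps)
  next
    case False
    then show ?thesis using 5 by (simp del: interp.simps add: interp.simps(5))
  qed
qed auto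

lemma her_rt: assumes h: "hereditary R \<eta>"
  shows "R\<^sup>*\<^sup>* p q \<Longrightarrow> interp app \<eta> T p \<subseteq> interp app \<eta> T q"
  by (induction rule: rtranclp_induct) (use her[OF h] in blast)+

lemma agree:
  "(\<forall>Y\<in>fvs D. \<forall>s. R\<^sup>*\<^sup>* p s \<longrightarrow> \<eta>1 Y s = \<eta>2 Y s) \<Longrightarrow> interp app \<eta>1 D p = interp app \<eta>2 D p"
proof (induction app \<eta>1 D p rule: interp.induct)
  case (3 app \<eta> A p)
  show ?case
  proof (cases "topvariant (Lat A)")
    case True then show ?thesis by (simp add: interp_tv del: interp.simps)
  next
    case False
    have "\<And>q. R p q \<Longrightarrow> interp app \<eta> A q = interp app \<eta>2 A q"
      using 3 False by (auto intro: converse_rtranclp_into_rtranclp)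
    then show ?thesis by (auto simp: interp_Lat simp del: interp.simps)
  qed
next
  case (4 app \<eta> A B p)
  show ?case
  proof (cases "topvariant (Arr A B)")
    case True then show ?thesis by (simp add: interp_tv del: interp.simps tv_simps)
  next
    case False
    have a: "interp app \<eta> A q = interp app \<eta>2 A q" if q: "R\<^sup>*\<^sup>* p q" for q
    proof -
      have "\<forall>Y\<in>fvs A. \<forall>s. R\<^sup>*\<^sup>* q s \<longrightarrow> \<eta> Y s = \<eta>2 Y s" using 4(3) q by (auto intro: rtranclp_trans)
      then show ?thesis using 4(1) False q by auto
    qed
    have b: "interp app \<eta> B q = interp app \<eta>2 B q" if q: "R\<^sup>*\<^sup>* p q" and v: "v \<in> interp app \<eta> A q" for q v
    proof -
      have "\<forall>Y\<in>fvs B. \<forall>s. R\<^sup>*\<^sup>* q s \<longrightarrow> \<eta> Y s = \<eta>2 Y s" using 4(3) q by (auto intro: rtranclp_trans)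
      then show ?thesis using 4(2) False q v by auto
    qed
    show ?thesis unfolding interp_Arr using a b by blast
  qed
next
  case (5 app \<eta> A p)
  then show ?case using fvs_opn[of 0 "Mu A" A] by auto
qed auto

lemma contract:
  "proper X D \<Longrightarrow> (\<forall>Y\<in>fvs D. Y \<noteq> X \<longrightarrow> (\<forall>s. R\<^sup>*\<^sup>* p s \<longrightarrow> \<eta>1 Y s = \<eta>2 Y s)) \<Longrightarrow>
   (\<forall>s. R\<^sup>+\<^sup>+ p s \<longrightarrow> \<eta>1 X s = \<eta>2 X s) \<Longrightarrow> interp app \<eta>1 D p = interp app \<eta>2 D p"
proof (induction app \<eta>1 D p rule: interp.induct)
  case (3 app \<eta> A p)
  have "\<And>q. R p q \<Longrightarrow> interp app \<eta> A q = interp app \<eta>2 A q"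
  proof -
    fix q assume "R p q"
    show "interp app \<eta> A q = interp app \<eta>2 A q"
    proof (rule agree, intro ballI allI impI)
      fix Y s assume "Y \<in> fvs A" "R\<^sup>*\<^sup>* q s"
      then have "R\<^sup>+\<^sup>+ p s" "R\<^sup>*\<^sup>* p s" using \<open>R p q\<close> by (auto intro: rtranclp_into_tranclp2 converse_rtranclp_into_rtranclp)
      then show "\<eta> Y s = \<eta>2 Y s" using 3 \<open>Y \<in> fvs A\<close> by (cases "Y = X") auto
    qed
  qed
  then show ?case by (auto simp: interp_Lat simp del: interp.simps)
next
  case (4 app \<eta> A B p)
  show ?case
  proof (cases "topvariant (Arr A B)")
    case True then show ?thesis by (simp add: interp_tv del: interp.simps tv_simps)
  next
    case False
    then have pr: "proper X A" "proper X B" using 4 by auto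
    have hy: "\<And>q. R\<^sup>*\<^sup>* p q \<Longrightarrow> (\<forall>s. R\<^sup>*\<^sup>* q s \<longrightarrow> R\<^sup>*\<^sup>* p s) \<and> (\<forall>s. R\<^sup>+\<^sup>+ q s \<longrightarrow> R\<^sup>+\<^sup>+ p s)"
      by (auto intro: rtranclp_trans rtranclp_tranclp_tranclp)
    have a: "\<And>q. R\<^sup>*\<^sup>* p q \<Longrightarrow> interp app \<eta> A q = interp app \<eta>2 A q"
    proof -
      fix q assume q: "R\<^sup>*\<^sup>* p q"
      show "interp app \<eta> A q = interp app \<eta>2 A q"
        using 4(1)[OF False, simplified, OF q pr(1)] hy[OF q] 4(4,5) by auto
    qed
    have b: "\<And>q v. R\<^sup>*\<^sup>* p q \<Longrightarrow> v \<in> interp app \<eta> A q \<Longrightarrow> interp app \<eta> B q = interp app \<eta>2 B q"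
    proof -
      fix q v assume q: "R\<^sup>*\<^sup>* p q" and v: "v \<in> interp app \<eta> A q"
      show "interp app \<eta> B q = interp app \<eta>2 B q"
        using 4(2)[OF False, simplified, OF q v pr(2)] hy[OF q] 4(4,5) by auto
    qed
    show ?thesis unfolding interp_Arr using a b by blast
  qed
next
  case (5 app \<eta> A p)
  show ?case
  proof (cases "topvariant (Mu A)")
    case True then show ?thesis by (simp add: interp_tv del: interp.simps)
  next
    case False
    show ?thesis
    proof (cases "\<exists>X. proper X (opn 0 (FV X) A)")
      case True
      have "proper X A" using 5(2) False by simp
      then have "proper X (opn 0 (Mu A) A)" using 5(2) proper_opn by blast
      then show ?thesis using 5 False True fvs_opn[of 0 "Mu A" A] by auto
    next
      case c: False
      then show ?thesis using False by simp
    qed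
  qed
qed auto

lemma subst_interp:
  "\<eta>' = \<eta>(X := interp app \<eta> T) \<Longrightarrow> wt D \<Longrightarrow> wt T \<Longrightarrow>
   interp app \<eta> (subst X T D) p = interp app \<eta>' D p"
proof (induction app \<eta>' D p rule: interp.induct)
  case (1 app \<eta>' Y p)
  then show ?case by auto
next
  case (2 app \<eta>' i p)
  then show ?case by (simp add: wt_def)
next
  case (3 app \<eta>' A p)
  show ?case
  proof (cases "topvariant (Lat A)")
    case True
    then have "topvariant (subst X T (Lat A))" by (rule tv_subst)
    then show ?thesis using interp_tv[OF True] interp_tv by metis
  next
    case False
    have "wt A" using 3 by (simp add: wt_def)
    then have "\<And>q. R p q \<Longrightarrow> interp app \<eta> (subst X T A) q = interp app \<eta>' A q"
      using 3 False by simp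
    then show ?thesis by (simp add: interp_Lat del: interp.simps)
  qed
next
  case (4 app \<eta>' A B p)
  show ?case
  proof (cases "topvariant (Arr A B)")
    case True
    then have "topvariant (subst X T (Arr A B))" by (rule tv_subst)
    then show ?thesis using interp_tv[OF True] interp_tv by metis
  next
    case False
    have w: "wt A" "wt B" using 4 by (simp_all add: wt_def)
    have a: "interp app \<eta> (subst X T A) q = interp app \<eta>' A q" if q: "R\<^sup>*\<^sup>* p q" for q
      using 4(1) False q w 4(3,5) by simp
    have b: "interp app \<eta> (subst X T B) q = interp app \<eta>' B q"
      if q: "R\<^sup>*\<^sup>* p q" and v: "v \<in> interp app \<eta>' A q" for q v
      using 4(2) False q v w 4(3,5) by simp
    show ?thesis unfolding subst.simps interp_Arr using a b by blast
  qed
next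
  case (5 app \<eta>' E p)
  show ?case
  proof (cases "topvariant (Mu E)")
    case True
    then have "topvariant (subst X T (Mu E))" by (rule tv_subst)
    then show ?thesis using interp_tv[OF True] interp_tv by metis
  next
    case False
    have wM: "lc 0 (Mu E)" "pm (Mu E)" using 5 by (simp_all add: wt_def)
    have wT: "lc 0 T" "pm T" using 5 by (simp_all add: wt_def)
    have pb: "properB 0 E" using wM by simp
    then have ex: "\<exists>X. proper X (opn 0 (FV X) E)" by (simp add: ex_proper)
    have wU: "wt (opn 0 (Mu E) E)" unfolding wt_def
      using wM lc_opn[of 0 E "Mu E"] pm_opn[of E "Mu E" 0] by simp
    have ih: "interp app \<eta> (subst X T (opn 0 (Mu E) E)) p = interp app \<eta>' (opn 0 (Mu E) E) p"
      using 5(1)[OF False ex 5(2) wU 5(4)] .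
    have rhs: "interp app \<eta>' (Mu E) p = interp app \<eta>' (opn 0 (Mu E) E) p"
      using False pb by (rule interp_Mu)
    have ws: "wt (Mu (subst X T E))" unfolding wt_def
      using wM wT lc_subst[of 0 "Mu E" T X] pm_subst[of "Mu E" T X] by simp
    have lhs: "interp app \<eta> (Mu (subst X T E)) p = interp app \<eta> (opn 0 (Mu (subst X T E)) (subst X T E)) p"
      using ws by (rule interp_unf)
    have "subst X T (opn 0 (Mu E) E) = opn 0 (Mu (subst X T E)) (subst X T E)"
      using wT by (simp add: subst_opn)
    then show ?thesis using ih rhs lhs by simp
  qed
qed

end

lemma wt_top: "wt top"
  by (simp add: wt_def top_def)

lemma wt_mu_intro: "wt (opn 0 (FV X) A) \<Longrightarrow> proper X (opn 0 (FV X) A) \<Longrightarrow> wt (Mu A)"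
  unfolding wt_def using lc_opn_FV_rev[of 0 X A] pm_opn_FV_rev[of 0 X A] proper_opn_FV[of X 0 A] by simp

lemma wt_unf: "wt (Mu A) \<Longrightarrow> wt (opn 0 (Mu A) A)"
  unfolding wt_def using lc_opn[of 0 A "Mu A"] pm_opn[of A "Mu A" 0] by simp

lemma is_type_wt: "is_type A \<Longrightarrow> wt A"
  using is_type_lc_pm wt_def by blast

lemma eqv_wt: "eqv b A B \<Longrightarrow> wt A \<and> wt B"
proof (induction rule: eqv.induct)
  case (e_unf A b)
  then show ?case using is_type_wt wt_unf by blast
qed (auto simp: wt_def is_type_wt wt_top[unfolded wt_def] dest: is_type_wt)

lemma sub_wt: "sub g A B \<Longrightarrow> wt A \<and> wt B"
proof (induction rule: sub.induct)
  case (s_eq g A B) then show ?case using eqv_wt by blast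
next
  case (s_mu X Y g A B) then show ?case using wt_mu_intro by blast
qed (auto simp: wt_def is_type_wt wt_top[unfolded wt_def] dest: is_type_wt)

locale lam_frame = wf_frame R for R :: "'w \<Rightarrow> 'w \<Rightarrow> bool" +
  assumes ll: "locally_linear R"
begin

lemma eqv_sound:
  "eqv b A B \<Longrightarrow> hereditary R \<eta> \<Longrightarrow> \<forall>p. interp app \<eta> A p = interp app \<eta> B p"
proof (induction rule: eqv.induct)
  case (e_lat b A B)
  then show ?case by (simp add: interp_Lat del: interp.simps)
next
  case (e_arr b A C B D)
  then show ?case by (simp add: interp_Arr del: interp.simps)
next
  case (e_top A b)
  have "topvariant (Arr A top)" using tv_top by simp
  then show ?case using tv_top interp_tv by metis
next
  case (e_unf A b)
  then have "wt (Mu A)" using is_type_wt by blast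
  then show ?case by (simp add: interp_unf del: interp.simps)
next
  case (e_fix A C b)
  from \<open>is_type (Mu C)\<close> obtain Z where Z: "Z \<notin> fvs C" "is_type (opn 0 (FV Z) C)"
      "proper Z (opn 0 (FV Z) C)"
    by (cases rule: is_type.cases) auto
  define D where "D = opn 0 (FV Z) C"
  have wA: "wt A" and wM: "wt (Mu C)" and wD: "wt D"
    using e_fix is_type_wt Z D_def by auto
  have lA: "lc 0 A" and lM: "lc 0 (Mu C)" using wA wM wt_def by auto
  show ?case
  proof
    fix p show "interp app \<eta> A p = interp app \<eta> (Mu C) p"
    proof (induction p rule: world_induct)
      case (1 p)
      have "interp app \<eta> A p = interp app \<eta> (opn 0 A C) p" using e_fix.IH e_fix.prems by simp
      also have "\<dots> = interp app \<eta> (subst Z A D) p"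
        using opn_subst_intro[OF Z(1) lA] D_def by simp
      also have "\<dots> = interp app (\<eta>(Z := interp app \<eta> A)) D p"
        by (rule subst_interp[OF refl wD wA])
      also have "\<dots> = interp app (\<eta>(Z := interp app \<eta> (Mu C))) D p"
        by (rule contract) (use Z(3) D_def 1 in auto)
      also have "\<dots> = interp app \<eta> (subst Z (Mu C) D) p"
        by (rule subst_interp[OF refl wD wM, symmetric])
      also have "\<dots> = interp app \<eta> (opn 0 (Mu C) C) p"
        using opn_subst_intro[OF Z(1) lM] D_def by simp
      also have "\<dots> = interp app \<eta> (Mu C) p"
        by (rule interp_unf[OF wM, symmetric])
      finally show ?case .
    qed
  qed
next
  case (e_dist A B)
  show ?case
  proof
    fix p
    show "interp app \<eta> (Lat (Arr A B)) p = interp app \<eta> (Arr (Lat A) (Lat B)) p"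
    proof (rule set_eqI, rule iffI)
      fix u assume "u \<in> interp app \<eta> (Lat (Arr A B)) p"
      then have L: "\<And>q r v. R p q \<Longrightarrow> R\<^sup>*\<^sup>* q r \<Longrightarrow> v \<in> interp app \<eta> A r \<Longrightarrow> app u v \<in> interp app \<eta> B r"
        by (auto simp: interp_Lat interp_Arr simp del: interp.simps)
      show "u \<in> interp app \<eta> (Arr (Lat A) (Lat B)) p"
        unfolding interp_Arr interp_Lat
      proof (intro CollectI allI impI ballI)
        fix q v s assume q: "R\<^sup>*\<^sup>* p q" and v: "v \<in> {v. \<forall>s. R q s \<longrightarrow> v \<in> interp app \<eta> A s}"
          and s: "R q s"
        have "R\<^sup>+\<^sup>+ p s" using q s by (rule rtranclp_into_tranclp1)
        then obtain q' where "R p q'" "R\<^sup>*\<^sup>* q' s" using tranclpD by metis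
        then show "app u v \<in> interp app \<eta> B s" using L v s by blast
      qed
    next
      fix u assume "u \<in> interp app \<eta> (Arr (Lat A) (Lat B)) p"
      then have L: "\<And>q v s. R\<^sup>*\<^sup>* p q \<Longrightarrow> (\<forall>s. R q s \<longrightarrow> v \<in> interp app \<eta> A s) \<Longrightarrow> R q s \<Longrightarrow>
          app u v \<in> interp app \<eta> B s"
        by (auto simp: interp_Lat interp_Arr simp del: interp.simps)
      show "u \<in> interp app \<eta> (Lat (Arr A B)) p"
        unfolding interp_Arr interp_Lat
      proof (intro CollectI allI impI ballI)
        fix q r v assume q: "R p q" and r: "R\<^sup>*\<^sup>* q r" and v: "v \<in> interp app \<eta> A r"
        have "R\<^sup>+\<^sup>+ p r" using q r by (rule rtranclp_into_tranclp2)
        then obtain w where w: "R\<^sup>*\<^sup>* p w" "R w r"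
          by (metis tranclp.cases tranclp_into_rtranclp rtranclp.rtrancl_refl)
        then obtain w' where w': "R\<^sup>*\<^sup>* w w'" "R w' r" "\<forall>s. R w' s \<longrightarrow> R\<^sup>*\<^sup>* r s"
          using ll unfolding locally_linear_def by blast
        have pw: "R\<^sup>*\<^sup>* p w'" using w w' by (meson rtranclp_trans)
        have "\<forall>s. R w' s \<longrightarrow> v \<in> interp app \<eta> A s"
          using w'(3) v her_rt[OF e_dist.prems] by blast
        then show "app u v \<in> interp app \<eta> B r" using L pw w'(2) by blast
      qed
    qed
  qed
qed auto

lemma sub_sound:
  fixes app :: "'v \<Rightarrow> 'v \<Rightarrow> 'v"
  shows "sub g A B \<Longrightarrow> \<forall>\<eta>. hereditary R \<eta> \<longrightarrow> (\<forall>(X, Y)\<in>g. \<forall>p. \<eta> X p \<subseteq> \<eta> Y p) \<longrightarrow>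
     (\<forall>p. interp app \<eta> A p \<subseteq> interp app \<eta> B p)"
proof (induction rule: sub.induct)
  case (s_ass X Y g)
  then show ?case by auto
next
  case (s_top g A)
  then show ?case by (simp add: interp_tv[OF tv_top] del: interp.simps)
next
  case (s_eq g A B)
  show ?case
  proof (intro allI impI)
    fix \<eta> :: "nat \<Rightarrow> 'w \<Rightarrow> 'v set" and p assume h: "hereditary R \<eta>"
    have "\<forall>p. interp app \<eta> A p = interp app \<eta> B p" by (rule eqv_sound[OF s_eq.hyps(2) h])
    then show "interp app \<eta> A p \<subseteq> interp app \<eta> B p" by simp
  qed
next
  case (s_trans g1 A B g2 C)
  show ?case
  proof (intro allI impI)
    fix \<eta> :: "nat \<Rightarrow> 'w \<Rightarrow> 'v set" and p assume h: "hereditary R \<eta>" and gh: "\<forall>(X, Y)\<in>g1 \<union> g2. \<forall>p. \<eta> X p \<subseteq> \<eta> Y p"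
    then have g1: "\<forall>(X, Y)\<in>g1. \<forall>p. \<eta> X p \<subseteq> \<eta> Y p" and g2: "\<forall>(X, Y)\<in>g2. \<forall>p. \<eta> X p \<subseteq> \<eta> Y p" by auto
    have "interp app \<eta> A p \<subseteq> interp app \<eta> B p" using s_trans.IH(1) h g1 by simp
    also have "\<dots> \<subseteq> interp app \<eta> C p" using s_trans.IH(2) h g2 by simp
    finally show "interp app \<eta> A p \<subseteq> interp app \<eta> C p" .
  qed
next
  case (s_lat g A B)
  show ?case
  proof (intro allI impI)
    fix \<eta> :: "nat \<Rightarrow> 'w \<Rightarrow> 'v set" and p assume h: "hereditary R \<eta>" and gh: "\<forall>(X, Y)\<in>g. \<forall>p. \<eta> X p \<subseteq> \<eta> Y p"
    have a: "\<And>q. interp app \<eta> A q \<subseteq> interp app \<eta> B q" using s_lat.IH h gh by simp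
    show "interp app \<eta> (Lat A) p \<subseteq> interp app \<eta> (Lat B) p"
      unfolding interp_Lat using a by blast
  qed
next
  case (s_arr g1 A' A g2 B B')
  show ?case
  proof (intro allI impI)
    fix \<eta> :: "nat \<Rightarrow> 'w \<Rightarrow> 'v set" and p assume h: "hereditary R \<eta>" and gh: "\<forall>(X, Y)\<in>g1 \<union> g2. \<forall>p. \<eta> X p \<subseteq> \<eta> Y p"
    then have g1: "\<forall>(X, Y)\<in>g1. \<forall>p. \<eta> X p \<subseteq> \<eta> Y p" and g2: "\<forall>(X, Y)\<in>g2. \<forall>p. \<eta> X p \<subseteq> \<eta> Y p" by auto
    have a: "\<And>q. interp app \<eta> A' q \<subseteq> interp app \<eta> A q" using s_arr.IH(1) h g1 by simp
    have b: "\<And>q. interp app \<eta> B q \<subseteq> interp app \<eta> B' q" using s_arr.IH(2) h g2 by simp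
    show "interp app \<eta> (Arr A B) p \<subseteq> interp app \<eta> (Arr A' B') p"
      unfolding interp_Arr using a b by blast
  qed
next
  case (s_later g A)
  show ?case
  proof (intro allI impI)
    fix \<eta> :: "nat \<Rightarrow> 'w \<Rightarrow> 'v set" and p assume h: "hereditary R \<eta>"
    show "interp app \<eta> A p \<subseteq> interp app \<eta> (Lat A) p"
      unfolding interp_Lat using her[OF h] by blast
  qed
next
  case (s_mu X Y g A B)
  let ?DA = "opn 0 (FV X) A" and ?DB = "opn 0 (FV Y) B"
  have XY: "X \<noteq> Y" using s_mu.hyps(2) unfolding wfa_def by blast
  have wD: "wt ?DA" "wt ?DB" using sub_wt[OF s_mu.hyps(1)] by auto
  have wM: "wt (Mu A)" "wt (Mu B)" using wD wt_mu_intro s_mu.hyps(7,8) by auto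
  have lM: "lc 0 (Mu A)" "lc 0 (Mu B)" using wM wt_def by auto
  show ?case
  proof (intro allI impI)
    fix \<eta> :: "nat \<Rightarrow> 'w \<Rightarrow> 'v set" and p0 assume h: "hereditary R \<eta>" and gh: "\<forall>(X, Y)\<in>g. \<forall>p. \<eta> X p \<subseteq> \<eta> Y p"
    show "interp app \<eta> (Mu A) p0 \<subseteq> interp app \<eta> (Mu B) p0"
    proof (induction p0 rule: world_induct)
      case (1 p)
      note IH0 = 1
      define MA where "MA = (\<lambda>s. if R\<^sup>+\<^sup>+ p s then interp app \<eta> (Mu A) s else {})"
      define MB where "MB = (\<lambda>s. if R\<^sup>+\<^sup>+ p s then interp app \<eta> (Mu B) s else {})"
      define \<eta>' where "\<eta>' = \<eta>(X := MA, Y := MB)"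
      have eX: "\<eta>' X = MA" and eY: "\<eta>' Y = MB" using XY \<eta>'_def by auto
      have eO: "\<And>Z. Z \<noteq> X \<Longrightarrow> Z \<noteq> Y \<Longrightarrow> \<eta>' Z = \<eta> Z" using \<eta>'_def by auto
      have hMA: "MA s \<subseteq> MA s'" if "R s s'" for s s'
        using that her[OF h, of s s' app "Mu A"] unfolding MA_def by (auto intro: tranclp.trancl_into_trancl)
      have hMB: "MB s \<subseteq> MB s'" if "R s s'" for s s'
        using that her[OF h, of s s' app "Mu B"] unfolding MB_def by (auto intro: tranclp.trancl_into_trancl)
      have h': "hereditary R \<eta>'"
        unfolding hereditary_def
      proof (intro allI impI)
        fix Z s s' assume "R s s'"
        then show "\<eta>' Z s \<subseteq> \<eta>' Z s'"
          using hMA hMB h eX eY eO unfolding hereditary_def by (cases "Z = X"; cases "Z = Y") auto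
      qed
      have gh0: "\<eta>' X' s \<subseteq> \<eta>' Y' s" if "(X', Y') \<in> insert (X, Y) g" for X' Y' s
      proof -
        from that consider "X' = X" "Y' = Y" | "(X', Y') \<in> g" by blast
        then show "\<eta>' X' s \<subseteq> \<eta>' Y' s"
        proof cases
          case 1 then show ?thesis using eX eY IH0 unfolding MA_def MB_def by (auto simp del: interp.simps)
        next
          case 2
          then have "X' \<in> ftv g" "Y' \<in> ftv g" unfolding ftv_def by force+
          then have "X' \<noteq> X" "X' \<noteq> Y" "Y' \<noteq> X" "Y' \<noteq> Y" using s_mu.hyps(5,6) by auto
          moreover have "\<eta> X' s \<subseteq> \<eta> Y' s" using gh 2 by fast
          ultimately show ?thesis using eO by simp
        qed
      qed
      have gh': "\<forall>(X', Y')\<in>insert (X, Y) g. \<forall>s. \<eta>' X' s \<subseteq> \<eta>' Y' s"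
        using gh0 by fast
      have main: "interp app \<eta>' ?DA p \<subseteq> interp app \<eta>' ?DB p"
        using s_mu.IH h' gh' by simp
      have "interp app \<eta> (Mu A) p = interp app \<eta> (opn 0 (Mu A) A) p"
        by (rule interp_unf[OF wM(1)])
      also have "\<dots> = interp app \<eta> (subst X (Mu A) ?DA) p"
        using opn_subst_intro[OF s_mu.hyps(3) lM(1)] by simp
      also have "\<dots> = interp app (\<eta>(X := interp app \<eta> (Mu A))) ?DA p"
        by (rule subst_interp[OF refl wD(1) wM(1)])
      also have "\<dots> = interp app \<eta>' ?DA p"
      proof (rule contract[OF s_mu.hyps(7)])
        show "\<forall>Z\<in>fvs ?DA. Z \<noteq> X \<longrightarrow> (\<forall>s. R\<^sup>*\<^sup>* p s \<longrightarrow> (\<eta>(X := interp app \<eta> (Mu A))) Z s = \<eta>' Z s)"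
        proof (intro ballI impI allI)
          fix Z s assume "Z \<in> fvs ?DA" "Z \<noteq> X"
          moreover then have "Z \<noteq> Y" using s_mu.hyps(6) by auto
          ultimately show "(\<eta>(X := interp app \<eta> (Mu A))) Z s = \<eta>' Z s" using eO by simp
        qed
        show "\<forall>s. R\<^sup>+\<^sup>+ p s \<longrightarrow> (\<eta>(X := interp app \<eta> (Mu A))) X s = \<eta>' X s"
          using eX MA_def by auto
      qed
      finally have ea: "interp app \<eta> (Mu A) p = interp app \<eta>' ?DA p" .
      have "interp app \<eta> (Mu B) p = interp app \<eta> (opn 0 (Mu B) B) p"
        by (rule interp_unf[OF wM(2)])
      also have "\<dots> = interp app \<eta> (subst Y (Mu B) ?DB) p"
        using opn_subst_intro[OF s_mu.hyps(4) lM(2)] by simp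
      also have "\<dots> = interp app (\<eta>(Y := interp app \<eta> (Mu B))) ?DB p"
        by (rule subst_interp[OF refl wD(2) wM(2)])
      also have "\<dots> = interp app \<eta>' ?DB p"
      proof (rule contract[OF s_mu.hyps(8)])
        show "\<forall>Z\<in>fvs ?DB. Z \<noteq> Y \<longrightarrow> (\<forall>s. R\<^sup>*\<^sup>* p s \<longrightarrow> (\<eta>(Y := interp app \<eta> (Mu B))) Z s = \<eta>' Z s)"
        proof (intro ballI impI allI)
          fix Z s assume "Z \<in> fvs ?DB" "Z \<noteq> Y"
          moreover then have "Z \<noteq> X" using s_mu.hyps(5) by auto
          ultimately show "(\<eta>(Y := interp app \<eta> (Mu B))) Z s = \<eta>' Z s" using eO by simp
        qed
        show "\<forall>s. R\<^sup>+\<^sup>+ p s \<longrightarrow> (\<eta>(Y := interp app \<eta> (Mu B))) Y s = \<eta>' Y s"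
          using eY MB_def by auto
      qed
      finally have eb: "interp app \<eta> (Mu B) p = interp app \<eta>' ?DB p" .
      show ?case using main ea eb by simp
    qed
  qed
qed

end

lemma final:
  assumes "lamA_frame R" "hereditary R \<eta>" "sub g A B" "\<forall>(X, Y)\<in>g. \<forall>p. \<eta> X p \<subseteq> \<eta> Y p"
  shows "\<forall>p. wf_frame.interp R app \<eta> A p \<subseteq> wf_frame.interp R app \<eta> B p"
proof -
  interpret lam_frame R
    using assms(1) unfolding lamA_frame_def by unfold_locales auto
  show ?thesis using sub_sound assms by blast
qed


theorem theorem5:
  fixes R :: "'w \<Rightarrow> 'w \<Rightarrow> bool"
    and app :: "'v \<Rightarrow> 'v \<Rightarrow> 'v"
    and sem :: "lterm \<Rightarrow> (nat \<Rightarrow> 'v) \<Rightarrow> 'v"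
    and \<eta> :: "nat \<Rightarrow> 'w \<Rightarrow> 'v set"
    and g :: "(nat \<times> nat) set"
    and A B :: ty
  assumes "syn_lambda_algebra app sem"
    and "lamA_frame R"
    and "hereditary R \<eta>"
    and "sub g A B"
    and "\<forall>(X, Y)\<in>g. \<forall>p. \<eta> X p \<subseteq> \<eta> Y p"
  shows "\<forall>p. wf_frame.interp R app \<eta> A p \<subseteq> wf_frame.interp R app \<eta> B p"
  using final assms(2-5) by blast

end
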